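(* Let $q$ be a prime power and $n$ a positive integer. If there exists an element of $\mathbb{F}_{q^n}$ that is primitive and $2$-normal over $\mathbb{F}_q$, then $n\geq 4$, and if moreover $n=4$ then $q\equiv 1\pmod 4$.
   Context: An element of $\mathbb{F}_{q^n}$ is primitive if it generates $\mathbb{F}_{q^n}^*$. For $\alpha\in\mathbb{F}_{q^n}$ let $g_\alpha(x)=\sum_{i=0}^{n-1}\alpha^{q^i}x^{n-1-i}$; $\alpha$ is $k$-normal over $\mathbb{F}_q$ if $\gcd(x^n-1,g_\alpha(x))$ in $\mathbb{F}_{q^n}[x]$ has degree $k$. *)

theory Defs
  imports "HOL-Computational_Algebra.Computational_Algebra"
begin

text \<open>We model F_{q^n} as a finite field type 'a with CARD('a) = q^n.
  The q-Frobenius x \<mapsto> x^q generates Gal(F_{q^n}/F_q), so the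
  conjugates alpha^(q^i) are as in the paper.\<close>

definition primitive_elem :: "'a::{field,finite} \<Rightarrow> bool" where
  "primitive_elem \<alpha> \<longleftrightarrow> \<alpha> \<noteq> 0 \<and> (\<forall>y::'a. y \<noteq> 0 \<longrightarrow> (\<exists>k::nat. y = \<alpha> ^ k))"

definition g_poly :: "nat \<Rightarrow> nat \<Rightarrow> 'a::field \<Rightarrow> 'a poly" where
  "g_poly q n \<alpha> = (\<Sum>i<n. monom (\<alpha> ^ (q ^ i)) (n - 1 - i))"

definition k_normal :: "nat \<Rightarrow> nat \<Rightarrow> nat \<Rightarrow> 'a::field_gcd \<Rightarrow> bool" where
  "k_normal q n k \<alpha> \<longleftrightarrow>
     degree (gcd (monom 1 n - 1) (g_poly q n \<alpha>)) = k"

end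

theory Submission imports Defs begin

lemma g3: "g_poly q 3 (x::'a::field) = [:x^(q^2), x^q, x:]"
  by (simp add: g_poly_def numeral_3_eq_3 lessThan_Suc monom_Suc monom_0 eval_nat_numeral)
lemma g4: "g_poly q 4 (x::'a::field) = [:x^(q^3), x^(q^2), x^q, x:]"
  by (simp add: g_poly_def numeral_eq_Suc lessThan_Suc monom_Suc monom_0 eval_nat_numeral)
lemma P3: "(monom 1 3 - 1 :: 'a::field poly) = [:-1,0,0,1:]"
  by (simp add: numeral_3_eq_3 monom_Suc monom_0 one_pCons diff_pCons)
lemma P4: "(monom 1 4 - 1 :: 'a::field poly) = [:-1,0,0,0,1:]"
  by (simp add: numeral_eq_Suc monom_Suc monom_0 one_pCons diff_pCons)
lemma deg1: "degree p \<le> 1 \<Longrightarrow> p = [:coeff p 0, coeff p 1:]"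
  by (rule poly_eqI) (auto simp: coeff_pCons coeff_eq_0 split: nat.split)
lemma deg2: "degree p \<le> 2 \<Longrightarrow> p = [:coeff p 0, coeff p 1, coeff p 2:]"
  by (rule poly_eqI) (auto simp: coeff_pCons coeff_eq_0 numeral_2_eq_2 split: nat.split)
lemma deg0: "degree p = 0 \<Longrightarrow> p = [:coeff p 0:]"
  by (rule poly_eqI) (auto simp: coeff_pCons coeff_eq_0 split: nat.split)

lemma card_zero: "of_nat (card (UNIV::'a set)) = (0::'a::{ring_1,finite})"
proof -
  have "(\<Sum>x\<in>UNIV. x + 1) = (\<Sum>x\<in>(UNIV::'a set). x)"
    by (rule sum.reindex_bij_witness[of _ "\<lambda>y. y - 1" "\<lambda>y. y + 1"]) auto
  then show ?thesis by (simp add: sum.distrib)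
qed

lemma pow_card: "(x::'a::{field,finite}) ^ card (UNIV::'a set) = x"
proof (cases "x = 0")
  case False
  have "x * (\<Prod>y\<in>UNIV-{0}. x * y) = x * x ^ (card (UNIV :: 'a set) - 1) * \<Prod>(UNIV-{0})"
    by (simp add: prod.distrib mult_ac)
  also have "x * x ^ (card (UNIV :: 'a set) - 1) = x ^ Suc (card (UNIV :: 'a set) - 1)"
    by (subst power_Suc) auto
  also have "Suc (card (UNIV :: 'a set) - 1) = card (UNIV :: 'a set)"
    using finite_UNIV_card_ge_0[where ?'a = 'a] by simp
  also have "(\<Prod>y\<in>UNIV-{0}. x * y) = (\<Prod>y\<in>UNIV-{0}. y)"
    by (rule prod.reindex_bij_witness[of _ "\<lambda>y. y / x" "\<lambda>y. x * y"]) (use False in auto)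
  finally show ?thesis
    by simp
qed (use finite_UNIV_card_ge_0[where ?'a = 'a] in auto)

lemma char_p:
  assumes "prime p" "card (UNIV::'a::{field,finite} set) = p ^ k"
  shows "CHAR('a) = p"
proof -
  have "CHAR('a) > 0" by (simp add: finite_imp_CHAR_pos)
  hence pr: "prime CHAR('a)" by (rule prime_CHAR_semidom)
  have "CHAR('a) dvd p ^ k" using card_zero[where 'a='a] assms(2)
    by (metis of_nat_eq_0_iff_char_dvd)
  hence "CHAR('a) dvd p" using pr prime_dvd_power by blast
  thus ?thesis using pr assms(1) primes_dvd_imp_eq by blast
qed

lemma frob_add:
  assumes "prime p" "card (UNIV::'a::{field,finite} set) = p ^ k" "q = p ^ m"
  shows "((x::'a) + y) ^ q = x ^ q + y ^ q"
proof -
  have "CHAR('a) = p" by (rule char_p[OF assms(1,2)])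
  thus ?thesis using freshmans_dream'[of q m x y] assms by simp
qed

lemma prim_bound:
  assumes "primitive_elem (\<alpha>::'a::{field,finite})" "\<alpha> ^ k = 1" "k > 0"
  shows "card (UNIV::'a set) - 1 \<le> k"
proof -
  have "UNIV - {0} \<subseteq> (\<lambda>j. \<alpha> ^ j) ` {..<k}"
  proof
    fix y assume "y \<in> (UNIV::'a set) - {0}"
    then obtain j where "y = \<alpha> ^ j" using assms(1) unfolding primitive_elem_def by auto
    also have "\<alpha> ^ j = \<alpha> ^ (k * (j div k) + j mod k)" by simp
    also have "\<dots> = \<alpha> ^ (j mod k)" by (simp only: power_add power_mult assms(2) power_one mult_1)
    finally show "y \<in> (\<lambda>j. \<alpha> ^ j) ` {..<k}" using assms(3) by auto
  qed
  hence "card (UNIV - {0::'a}) \<le> card ((\<lambda>j. \<alpha> ^ j) ` {..<k})" by (intro card_mono) auto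
  also have "\<dots> \<le> k" using card_image_le[of "{..<k}"] by auto
  finally show ?thesis by (simp add: card_Diff_singleton)
qed

lemma pow_pred: "(x::'a::field) \<noteq> 0 \<Longrightarrow> r \<ge> 1 \<Longrightarrow> x ^ r = l * x \<Longrightarrow> x ^ (r - 1) = l"
proof -
  assume a: "x \<noteq> 0" "r \<ge> 1" "x ^ r = l * x"
  have "x ^ r = x ^ (r - 1) * x" using a(2) by (metis Suc_diff_le diff_Suc_1 power_Suc2)
  thus ?thesis using a by simp
qed

lemma g_coeff_top: "n > 0 \<Longrightarrow> coeff (g_poly q n \<alpha>) (n - 1) = \<alpha>"
proof -
  assume n: "n > 0"
  have "coeff (g_poly q n \<alpha>) (n - 1) = (\<Sum>i<n. if i = 0 then \<alpha> ^ (q ^ i) else 0)"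
    unfolding g_poly_def coeff_sum coeff_monom
    by (rule sum.cong) (use n in auto)
  also have "\<dots> = \<alpha>" using n by (simp add: sum.delta)
  finally show ?thesis .
qed

lemma g_deg: "degree (g_poly q n \<alpha>) \<le> n - 1"
proof (rule degree_le, intro allI impI)
  fix i assume "n - 1 < i"
  thus "coeff (g_poly q n \<alpha>) i = 0"
    unfolding g_poly_def coeff_sum coeff_monom by (intro sum.neutral) auto
qed

lemma P_nz: "n > 0 \<Longrightarrow> (monom 1 n - 1 :: 'a::field poly) \<noteq> 0"
proof
  assume "n > 0" "(monom 1 n - 1 :: 'a poly) = 0"
  hence "coeff (monom 1 n - 1 :: 'a poly) n = 0" by simp
  thus False using \<open>n > 0\<close> by simp
qed

lemma P_deg: "n > 0 \<Longrightarrow> degree (monom 1 n - 1 :: 'a::field poly) = n"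
proof (rule antisym)
  assume n: "n > 0"
  show "degree (monom 1 n - 1 :: 'a::field poly) \<le> n"
    by (rule degree_le) (use n in auto)
  show "n \<le> degree (monom 1 n - 1 :: 'a::field poly)"
    by (rule le_degree) (use n in auto)
qed

lemma case3:
  fixes \<alpha> :: "'a::{field_gcd,finite}"
  assumes prim: "primitive_elem \<alpha>" and q2: "q \<ge> 2" and card: "card (UNIV::'a set) = q ^ 3"
    and dg: "degree (gcd (monom 1 3 - 1) (g_poly q 3 \<alpha>)) = 2"
  shows False
proof -
  define D where "D = gcd (monom 1 3 - 1) (g_poly q 3 \<alpha>)"
  have a0: "\<alpha> \<noteq> 0" using prim by (simp add: primitive_elem_def)
  have Pnz: "(monom 1 3 - 1 :: 'a poly) \<noteq> 0" by (rule P_nz) simp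
  obtain h where Ph: "monom 1 3 - 1 = D * h" unfolding D_def by (meson gcd_dvd1 dvdE)
  obtain k where gk: "g_poly q 3 \<alpha> = D * k" unfolding D_def by (meson gcd_dvd2 dvdE)
  have Dnz: "D \<noteq> 0" "h \<noteq> 0" using Ph Pnz by auto
  have gnz: "g_poly q 3 \<alpha> \<noteq> 0" using g_coeff_top[of 3 q \<alpha>] a0 by auto
  hence knz: "k \<noteq> 0" using gk by auto
  have "3 = degree D + degree h" using P_deg[of 3, where 'a='a] Ph Dnz by (simp add: degree_mult_eq)
  hence dh: "degree h = 1" using dg D_def by simp
  have "degree D + degree k \<le> 2" using g_deg[of q 3 \<alpha>] gk Dnz knz by (simp add: degree_mult_eq)
  hence dk: "degree k = 0" using dg D_def by simp
  have h1: "coeff h 1 \<noteq> 0" using dh Dnz(2) by (metis leading_coeff_0_iff)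
  have "g_poly q 3 \<alpha> * h = k * (monom 1 3 - 1)" using Ph gk by (simp add: algebra_simps)
  hence "[:\<alpha>^(q^2), \<alpha>^q, \<alpha>:] * [:coeff h 0, coeff h 1:] = [:coeff k 0:] * [:-1,0,0,1:]"
    using deg1[of h] deg0[of k] dh dk by (simp add: g3 P3)
  hence eqs: "\<alpha>^(q^2) * coeff h 0 = - coeff k 0" "\<alpha>^(q^2) * coeff h 1 + \<alpha>^q * coeff h 0 = 0"
     "\<alpha>^q * coeff h 1 + \<alpha> * coeff h 0 = 0" "\<alpha> * coeff h 1 = coeff k 0"
    by (simp_all add: algebra_simps)
  define l where "l = - coeff h 0 / coeff h 1"
  have r1: "\<alpha>^q = l * \<alpha>" using eqs h1 unfolding l_def by (simp add: field_simps) (metis add_eq_0_iff mult.commute)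
  have r2: "\<alpha>^(q^2) = l * \<alpha>^q" using eqs h1 unfolding l_def by (simp add: field_simps) (metis add_eq_0_iff mult.commute)
  have r3: "\<alpha> = l * \<alpha>^(q^2)" using eqs h1 unfolding l_def by (simp add: field_simps)
  have eq: "\<alpha> = l * (l * (l * \<alpha>))" using r3 unfolding r2 r1 .
  have "l^3 * \<alpha> = 1 * \<alpha>" unfolding power3_eq_cube mult.assoc mult_1 by (rule sym[OF eq])
  hence l3: "l^3 = 1" using a0 by (rule mult_right_cancel[THEN iffD1, rotated])
  have "\<alpha>^(q-1) = l" using pow_pred[OF a0 _ r1] q2 by simp
  hence "\<alpha>^(3*(q-1)) = 1" using l3 by (metis power_mult mult.commute)
  hence "q^3 - 1 \<le> 3*(q-1)" using prim_bound[OF prim] card q2 by fastforce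
  moreover have "q^3 \<ge> 4 * q"
  proof -
    have "2*2 \<le> q*q" using q2 by (intro mult_le_mono) auto
    hence "(2*2)*q \<le> (q*q)*q" by (rule mult_le_mono1)
    thus ?thesis by (simp add: power3_eq_cube)
  qed
  ultimately show False using q2 by linarith
qed

lemma mult4:
  fixes a0 :: "'a::field"
  assumes "[:a3, a2, a1, a0:] * [:h0, h1, hh2:] = [:k0, k1:] * [:-1,0,0,0,1:]"
  shows "a3*h0 = -k0 \<and> a2*h0 + a3*h1 = -k1 \<and> a1*h0+a2*h1+a3*hh2 = 0 \<and> a0*h0+a1*h1+a2*hh2=0
     \<and> a0*h1+a1*hh2 = k0 \<and> a0*hh2 = k1"
  using assms by (simp add: algebra_simps)
lemma mult4b:
  fixes e :: "'a::field"
  assumes "[:-1,0,0,0,1:] = [:e, d, f:] * [:h0, h1, hh2:]"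
  shows "e * h0 = -1 \<and> e * h1 + d * h0 = 0 \<and> e * hh2 + d * h1 + f * h0 = 0 \<and> d * hh2 + f * h1 = 0 \<and> f * hh2 = 1"
  using assms by (simp add: algebra_simps)

lemma bound4: "(q::nat) \<ge> 2 \<Longrightarrow> q^4 - 1 \<le> 2*(q^2-1) \<Longrightarrow> False"
proof -
  assume q: "q \<ge> 2" "q^4 - 1 \<le> 2*(q^2-1)"
  define Q where "Q = q^2"
  have Q: "Q \<ge> 4" unfolding Q_def using power_mono[OF q(1), of 2] by simp
  have "q^4 = Q*Q" unfolding Q_def by (simp add: power_mult[symmetric] power2_eq_square[symmetric] power_add[symmetric])
  moreover have "Q*Q \<ge> 4*Q" using Q by simp
  ultimately show False using q(2) Q unfolding Q_def[symmetric] by linarith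
qed

lemma bound4b: "(q::nat) \<ge> 2 \<Longrightarrow> q^4 - 1 \<le> 4*(q-1) \<Longrightarrow> False"
proof -
  assume q: "q \<ge> 2" "q^4 - 1 \<le> 4*(q-1)"
  have "q^4 \<ge> q^2" using q(1) by (intro power_increasing) auto
  moreover have "2*(q^2-1) \<ge> 4*(q-1)"
  proof -
    have "q*q \<ge> 2*q" using q(1) by simp
    thus ?thesis unfolding power2_eq_square by linarith
  qed
  ultimately have "q^4 - 1 \<le> 2*(q^2-1)" using q(2) bound4 q(1) by linarith
  thus False using bound4 q(1) by blast
qed

lemma divrel:
  fixes hh2 :: "'a::field"
  assumes hz: "hh2 \<noteq> 0" and T0: "h0*x + h1*a1 + hh2*a2 = 0"
  shows "(h0/hh2)*x + (h1/hh2)*a1 + a2 = 0"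
proof -
  have "(h0/hh2)*x + (h1/hh2)*a1 + a2 = (h0*x + h1*a1 + hh2*a2)/hh2" using hz by (simp add: field_simps)
  thus ?thesis using T0 by simp
qed

lemma lin:
  fixes v :: "'a::field"
  assumes "v \<noteq> 0" "u*x + v*y = 0"
  shows "y = (- u / v) * x"
proof -
  have "v*y = -(u*x)" using assms(2) by (simp add: eq_neg_iff_add_eq_0 add.commute)
  hence "y = -(u*x)/v" using assms(1) by (simp add: field_simps)
  thus ?thesis by simp
qed

lemma hdl:
  fixes hh2 :: "'a::field"
  assumes "hh2 \<noteq> 0" "d * hh2 + f * h1 = 0 \<and> f * hh2 = 1"
  shows "d*hh2 = - (h1/hh2)"
proof -
  have "f = 1/hh2" using assms by (simp add: field_simps)
  thus ?thesis using assms(2) by (simp add: eq_neg_iff_add_eq_0)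
qed

lemma case4:
  fixes \<alpha> :: "'a::{field_gcd,finite}"
  assumes prim: "primitive_elem \<alpha>" and q2: "q \<ge> 2" and card: "card (UNIV::'a set) = q ^ 4"
    and dg: "degree (gcd (monom 1 4 - 1) (g_poly q 4 \<alpha>)) = 2"
    and fa: "\<And>x y::'a. (x + y) ^ q = x ^ q + y ^ q"
    and qm: "q mod 4 \<noteq> 1"
  shows False
proof -
  define D where "D = gcd (monom 1 4 - 1) (g_poly q 4 \<alpha>)"
  have a0: "\<alpha> \<noteq> 0" using prim by (simp add: primitive_elem_def)
  have Pnz: "(monom 1 4 - 1 :: 'a poly) \<noteq> 0" by (rule P_nz) simp
  obtain h where Ph: "monom 1 4 - 1 = D * h" unfolding D_def by (meson gcd_dvd1 dvdE)
  obtain k where gk: "g_poly q 4 \<alpha> = D * k" unfolding D_def by (meson gcd_dvd2 dvdE)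
  have Dnz: "D \<noteq> 0" "h \<noteq> 0" using Ph Pnz by auto
  have gnz: "g_poly q 4 \<alpha> \<noteq> 0" using g_coeff_top[of 4 q \<alpha>] a0 by auto
  hence knz: "k \<noteq> 0" using gk by auto
  have "4 = degree D + degree h" using P_deg[of 4, where 'a='a] Ph Dnz by (simp add: degree_mult_eq)
  hence dh: "degree h = 2" using dg D_def by simp
  have "degree D + degree k \<le> 3" using g_deg[of q 4 \<alpha>] gk Dnz knz by (simp add: degree_mult_eq)
  hence dk: "degree k \<le> 1" using dg D_def by simp
  have hh2: "coeff h 2 \<noteq> 0" using dh Dnz(2) by (metis leading_coeff_0_iff)
  define a1 a2 a3 where "a1 = \<alpha>^q" "a2 = \<alpha>^(q^2)" "a3 = \<alpha>^(q^3)"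
  define h0 h1 hh2 k0 k1 where "h0 = coeff h 0" "h1 = coeff h 1" "hh2 = coeff h 2" "k0 = coeff k 0" "k1 = coeff k 1"
  define e d f where "e = coeff D 0" "d = coeff D 1" "f = coeff D 2"
  have "g_poly q 4 \<alpha> * h = k * (monom 1 4 - 1)" using Ph gk by (simp add: algebra_simps)
  hence "[:a3, a2, a1, \<alpha>:] * [:h0, h1, hh2:] = [:k0, k1:] * [:-1,0,0,0,1:]"
    using deg2[of h] deg1[of k] dh dk unfolding a1_a2_a3_def h0_h1_hh2_k0_k1_def by (simp add: g4 P4)
  note C = mult4[OF this]
  have "[:-1,0,0,0,1:] = [:e, d, f:] * [:h0, h1, hh2:]"
    using Ph deg2[of h] deg2[of D] dh dg unfolding D_def[symmetric] e_d_f_def h0_h1_hh2_k0_k1_def by (simp add: P4)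
  note DH = mult4b[OF this]
  have hz: "hh2 \<noteq> 0" using hh2 unfolding h0_h1_hh2_k0_k1_def .
  define b c where "b = h1 / hh2" "c = h0 / hh2"
  have T0: "h0*\<alpha> + h1*a1 + hh2*a2 = 0" using C by (simp add: algebra_simps)
  have T1: "h0*a1 + h1*a2 + hh2*a3 = 0" using C by (simp add: algebra_simps)
  have T2: "h0*a2 + h1*a3 + hh2*\<alpha> = 0" using C by (simp add: algebra_simps)
  have T3: "h0*a3 + h1*\<alpha> + hh2*a1 = 0" using C by (simp add: algebra_simps)
  have S0: "c*\<alpha> + b*a1 + a2 = 0" using divrel[OF hz T0] unfolding b_c_def .
  have S1: "c*a1 + b*a2 + a3 = 0" using divrel[OF hz T1] unfolding b_c_def .
  have S2: "c*a2 + b*a3 + \<alpha> = 0" using divrel[OF hz T2] unfolding b_c_def .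
  have S3: "c*a3 + b*\<alpha> + a1 = 0" using divrel[OF hz T3] unfolding b_c_def .
  have q0: "q > 0" using q2 by simp
  have fr1: "\<alpha>^q = a1" "a1^q = a2" "a2^q = a3" "a3^q = \<alpha>"
    unfolding a1_a2_a3_def
    by (simp_all add: power_mult[symmetric] power2_eq_square power3_eq_cube mult_ac)
       (metis card pow_card power_mult power4_eq_xxxx mult_ac)
  have frob: "(x*y + z*w + v)^q = x^q*y^q + z^q*w^q + v^q" for x y z w v :: 'a
    by (simp add: fa power_mult_distrib)
  define u v where "u = c^q - c" "v = b^q - b"
  have E0: "u*a1 + v*a2 = 0"
  proof -
    have "(c*\<alpha> + b*a1 + a2)^q = 0" using S0 q0 by simp
    hence "c^q*a1 + b^q*a2 + a3 = 0" unfolding frob fr1 .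
    have "u*a1 + v*a2 = (c^q*a1 + b^q*a2 + a3) - (c*a1 + b*a2 + a3)" by (simp add: u_v_def algebra_simps)
    thus ?thesis using S1 \<open>c^q*a1 + b^q*a2 + a3 = 0\<close> by simp
  qed
  have E1: "u*a2 + v*a3 = 0"
  proof -
    have "(c*a1 + b*a2 + a3)^q = 0" using S1 q0 by simp
    hence X: "c^q*a2 + b^q*a3 + \<alpha> = 0" unfolding frob fr1 .
    have "u*a2 + v*a3 = (c^q*a2 + b^q*a3 + \<alpha>) - (c*a2 + b*a3 + \<alpha>)" by (simp add: u_v_def algebra_simps)
    thus ?thesis using S2 X by simp
  qed
  have E2: "u*a3 + v*\<alpha> = 0"
  proof -
    have "(c*a2 + b*a3 + \<alpha>)^q = 0" using S2 q0 by simp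
    hence X: "c^q*a3 + b^q*\<alpha> + a1 = 0" unfolding frob fr1 .
    have "u*a3 + v*\<alpha> = (c^q*a3 + b^q*\<alpha> + a1) - (c*a3 + b*\<alpha> + a1)" by (simp add: u_v_def algebra_simps)
    thus ?thesis using S3 X by simp
  qed
  have E3: "u*\<alpha> + v*a1 = 0"
  proof -
    have "(c*a3 + b*\<alpha> + a1)^q = 0" using S3 q0 by simp
    hence X: "c^q*\<alpha> + b^q*a1 + a2 = 0" unfolding frob fr1 .
    have "u*\<alpha> + v*a1 = (c^q*\<alpha> + b^q*a1 + a2) - (c*\<alpha> + b*a1 + a2)" by (simp add: u_v_def algebra_simps)
    thus ?thesis using S0 X by simp
  qed
  have v0: "v = 0"
  proof (rule ccontr)
    assume vz: "v \<noteq> 0"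
    define l where "l = - u / v"
    have l1: "a2 = l * a1" using lin[OF vz E0] unfolding l_def .
    have l2: "a3 = l * a2" using lin[OF vz E1] unfolding l_def .
    have l3: "\<alpha> = l * a3" using lin[OF vz E2] unfolding l_def .
    have l4: "a1 = l * \<alpha>" using lin[OF vz E3] unfolding l_def .
    have eq: "\<alpha> = l * (l * (l * (l * \<alpha>)))" using l3 unfolding l2 l1 l4 .
    have "l^4 * \<alpha> = 1 * \<alpha>" unfolding power4_eq_xxxx mult.assoc mult_1 by (rule sym[OF eq])
    hence l4': "l^4 = 1" using a0 by (rule mult_right_cancel[THEN iffD1, rotated])
    have "\<alpha>^(q-1) = l" using pow_pred[OF a0 _ l4[folded fr1(1)]] q2 by simp
    hence "\<alpha>^(4*(q-1)) = 1" using l4' by (metis power_mult mult.commute)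
    hence "q^4 - 1 \<le> 4*(q-1)" using prim_bound[OF prim] card q2 by fastforce
    thus False using bound4b q2 by blast
  qed
  have u0: "u = 0" using E3 v0 a0 by simp
  have bq: "b^q = b" and cq: "c^q = c" using u0 v0 unfolding u_v_def by simp_all
  have hd: "d*hh2 = -b" using hdl[OF hz] DH unfolding b_c_def by blast
  have hf: "f*hh2 = 1" using DH by simp
  have he: "e*hh2 = b^2 - c"
  proof -
    have "e * hh2 + d * h1 + f * h0 = 0" using DH by simp
    moreover have "e * hh2 + d * h1 + f * h0 = e*hh2 + (d*hh2) * b + (f*hh2) * c"
      using hz unfolding b_c_def by (simp add: field_simps)
    ultimately have "e*hh2 + (-b) * b + 1 * c = 0" unfolding hd hf by simp
    thus ?thesis by (simp add: power2_eq_square algebra_simps)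
  qed
  have K1: "(b^2-c)*b + (-b)*c = 0"
  proof -
    have "e * h1 + d * h0 = (e*hh2) * b + (d*hh2) * c"
      using hz unfolding b_c_def by (simp add: field_simps)
    thus ?thesis using DH unfolding he hd by simp
  qed
  have K2: "(b^2-c)*c = -1"
  proof -
    have "e * h0 = (e*hh2) * c"
      using hz unfolding b_c_def by (simp add: field_simps)
    thus ?thesis using DH unfolding he by simp
  qed
  show False
  proof (cases "b = 0")
    case True
    have cc: "c*c = 1" using K2 True by (simp add: power2_eq_square)
    have "a2 = (-c) * \<alpha>" using S0 True by (simp add: eq_neg_iff_add_eq_0 add.commute)
    hence "\<alpha>^(q^2) = (-c) * \<alpha>" unfolding a1_a2_a3_def .
    hence "\<alpha>^(q^2 - 1) = -c" using pow_pred[OF a0] q2 by (simp add: Suc_leI)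
    moreover have "\<alpha>^(2*(q^2-1)) = (\<alpha>^(q^2-1))^2" by (metis power_mult mult.commute)
    ultimately have "\<alpha>^(2*(q^2-1)) = 1" using cc by (simp add: power2_eq_square)
    moreover have "0 < 2*(q^2-1)"
    proof -
      have "2*2 \<le> q*q" using q2 by (intro mult_le_mono) auto
      thus ?thesis by (simp add: power2_eq_square)
    qed
    ultimately have "q^4 - 1 \<le> 2*(q^2-1)" using prim_bound[OF prim] card by metis
    thus False using bound4 q2 by blast
  next
    case False
    have "b*(b^2 - (c+c)) = 0" using K1 by (simp add: algebra_simps)
    hence bb: "b^2 = c + c" using False by simp
    have cc: "c*c = -1" using K2 bb by (simp add: algebra_simps)
    have c4: "c^4 = 1" using cc by (simp add: power4_eq_xxxx mult.assoc[symmetric])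
    have "c^q = c^(4*(q div 4) + q mod 4)" by simp
    also have "\<dots> = c^(q mod 4)" by (simp only: power_add power_mult c4 power_one mult_1)
    finally have cm: "c^(q mod 4) = c" using cq by simp
    have "c + c = 0"
    proof -
      have "q mod 4 < 4" by simp
      hence "q mod 4 = 0 \<or> q mod 4 = 2 \<or> q mod 4 = 3" using qm by linarith
      moreover
      { assume "q mod 4 = 0"
        hence "c = 1" using cm by simp
        hence "(1::'a) = -1" using cc by simp
        hence "c + c = 0" using \<open>c = 1\<close> by (metis add.right_inverse) }
      moreover
      { assume "q mod 4 = 2"
        hence "c*c = c" using cm by (simp add: power2_eq_square)
        hence "c = -1" using cc by simp
        hence "(1::'a) = -1" using cc by simp
        hence "c + c = 0" using \<open>c = -1\<close> by (metis add.right_inverse minus_minus) }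
      moreover
      { assume "q mod 4 = 3"
        hence "c*c*c = c" using cm by (simp add: power3_eq_cube)
        hence "-c = c" using cc by simp
        hence "c + c = 0" by (metis add.right_inverse) }
      ultimately show ?thesis by (elim disjE) simp_all
    qed
    hence "b^2 = 0" using bb by simp
    thus False using False by simp
  qed
qed

theorem lemma3p1:
  fixes q n :: nat
  assumes "\<exists>p m. prime p \<and> m > 0 \<and> q = p ^ m"
    and "n > 0"
    and "card (UNIV :: 'a set) = q ^ n"
    and "\<exists>\<alpha>::'a::{field_gcd,finite}. primitive_elem \<alpha> \<and> k_normal q n 2 \<alpha>"
  shows "n \<ge> 4 \<and> (n = 4 \<longrightarrow> q mod 4 = 1)"
proof -
  obtain p m where pm: "prime p" "m > 0" "q = p ^ m" using assms(1) by blast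
  obtain \<alpha> :: 'a where prim: "primitive_elem \<alpha>" and kn: "k_normal q n 2 \<alpha>" using assms(4) by blast
  have p2: "p \<ge> 2" using pm(1) by (simp add: prime_ge_2_nat)
  have "p \<le> p ^ m" using pm(2) p2 by (simp add: self_le_power)
  hence q2: "q \<ge> 2" using p2 pm(3) by simp
  have a0: "\<alpha> \<noteq> 0" using prim by (simp add: primitive_elem_def)
  have dg: "degree (gcd (monom 1 n - 1) (g_poly q n \<alpha>)) = 2" using kn by (simp add: k_normal_def)
  have gnz: "g_poly q n \<alpha> \<noteq> 0" using g_coeff_top[OF assms(2), of q \<alpha>] a0 by auto
  have "degree (gcd (monom 1 n - 1) (g_poly q n \<alpha>)) \<le> degree (g_poly q n \<alpha>)"
    by (rule dvd_imp_degree_le[OF gcd_dvd2 gnz])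
  hence n3: "n \<ge> 3" using dg g_deg[of q n \<alpha>] by linarith
  have card': "card (UNIV :: 'a set) = p ^ (m * n)" using assms(3) pm(3) by (simp add: power_mult)
  have fa: "\<And>x y::'a. (x + y) ^ q = x ^ q + y ^ q" by (rule frob_add[OF pm(1) card' pm(3)])
  show ?thesis
  proof (cases "n = 3")
    case True
    thus ?thesis using case3[OF prim q2] assms(3) dg by simp
  next
    case False
    show ?thesis
    proof (cases "n = 4")
      case True
      have "q mod 4 = 1"
      proof (rule ccontr)
        assume "q mod 4 \<noteq> 1"
        thus False using case4[OF prim q2 _ _ fa] assms(3) dg True by simp
      qed
      thus ?thesis using True by simp
    next
      case False
      thus ?thesis using n3 \<open>n \<noteq> 3\<close> by simp
    qed
  qed
qed

end
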